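(* Let $\mathcal{G}$ be a directed path on $N$ nodes with unit edge weights, whose nodes are labelled $1,\dots,N$ in the order in which they appear along the path starting from the root (so the edges are from $i+1$ to $i$ for $i=1,\dots,N-1$, with weight $1$). Then the entries of its matrix $X$ are $$x_{k,j}=\frac{2N^2+3N+1+3k^2+3j^2-3(N+1)k-3(N+1)j}{3N}-|k-j|,\qquad 1\le k,j\le N.$$
   Context: For a directed graph with nonnegative adjacency matrix $A=[a_{i,j}]$ ($a_{i,j}>0$ iff there is an edge from $i$ to $j$), let $D$ be the diagonal matrix of out-degrees $d_k=\sum_j a_{k,j}$ and $L=D-A$. Let $\Pi=I_N-\frac1N\mathbf{1}_N\mathbf{1}_N^T$, $Q\in\mathbb{R}^{(N-1)\times N}$ with $Q\mathbf{1}_N=0$, $QQ^T=I_{N-1}$, $Q^TQ=\Pi$; $\overline L=QLQ^T$; $\Sigma$ the unique solution of $\overline L\Sigma+\Sigma\overline L^T=I_{N-1}$; and $X=2Q^T\Sigma Q$ (independent of $Q$). The root of the path is its unique node of out-degree $0$. *)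

theory Defs
  imports "Jordan_Normal_Form.Matrix"
begin

text \<open>Matrices are 0-indexed: node k (1-based in the paper) is index k-1.\<close>

definition out_degree_mat :: "real mat \<Rightarrow> real mat" where
  "out_degree_mat A = mat (dim_row A) (dim_row A)
     (\<lambda>(i,j). if i = j then (\<Sum>l<dim_col A. A $$ (i,l)) else 0)"

definition laplacian :: "real mat \<Rightarrow> real mat" where
  "laplacian A = out_degree_mat A - A"

definition centering_mat :: "nat \<Rightarrow> real mat" where
  "centering_mat N = 1\<^sub>m N - (1 / real N) \<cdot>\<^sub>m mat N N (\<lambda>_. 1)"

text \<open>Directed path with unit weights, edges from node i+1 to node i (1-based),
  i.e. a_{r,c} = 1 iff r = c+1 (0-based).\<close>
definition path_adj :: "nat \<Rightarrow> real mat" where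
  "path_adj N = mat N N (\<lambda>(r,c). if r = c + 1 then 1 else 0)"

definition X_mat :: "real mat \<Rightarrow> real mat \<Rightarrow> real mat" where
  "X_mat Q \<Sigma> = 2 \<cdot>\<^sub>m (transpose_mat Q * \<Sigma> * Q)"

end

theory Submission
  imports Defs
begin

definition Smat :: "nat \<Rightarrow> real mat" where
  "Smat N = mat N N (\<lambda>(i,j). if j = i - 1 then 1 else 0)"

lemma Smat_dim[simp]: "dim_row (Smat N) = N" "dim_col (Smat N) = N"
  by (simp_all add: Smat_def)

lemma Smat_carrier[simp]: "Smat N \<in> carrier_mat N N"
  by (simp add: Smat_def)

lemma cent_carrier[simp]: "centering_mat N \<in> carrier_mat N N"
  unfolding centering_mat_def by (intro minus_carrier_mat smult_carrier_mat mat_carrier)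

lemma cent_index: "i < N \<Longrightarrow> j < N \<Longrightarrow> centering_mat N $$ (i,j) = (if i = j then 1 else 0) - 1 / real N"
  by (simp add: centering_mat_def)

lemma S_mult: assumes Z: "Z \<in> carrier_mat N m" and i: "i < N" and j: "j < m"
  shows "(Smat N * Z) $$ (i,j) = Z $$ (i - 1, j)"
proof -
  have "(Smat N * Z) $$ (i,j) = (\<Sum>l<N. (if l = i - 1 then 1 else 0) * Z $$ (l,j))"
    using Z i j by (simp add: Smat_def scalar_prod_def atLeast0LessThan)
  also have "\<dots> = (\<Sum>l<N. if l = i - 1 then Z $$ (l,j) else 0)"
    by (intro sum.cong) auto
  also have "\<dots> = Z $$ (i - 1, j)" using i by simp
  finally show ?thesis .
qed

lemma mult_ST: assumes Z: "Z \<in> carrier_mat m N" and i: "i < m" and j: "j < N"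
  shows "(Z * transpose_mat (Smat N)) $$ (i,j) = Z $$ (i, j - 1)"
proof -
  have "(Z * transpose_mat (Smat N)) $$ (i,j) = (\<Sum>l<N. Z $$ (i,l) * (if l = j - 1 then 1 else 0))"
    using Z i j by (simp add: Smat_def scalar_prod_def atLeast0LessThan)
  also have "\<dots> = (\<Sum>l<N. if l = j - 1 then Z $$ (i,l) else 0)"
    by (intro sum.cong) auto
  also have "\<dots> = Z $$ (i, j - 1)" using j by simp
  finally show ?thesis .
qed

lemma Pi_mult: assumes Z: "Z \<in> carrier_mat N m" and i: "i < N" and j: "j < m"
  shows "(centering_mat N * Z) $$ (i,j) = Z $$ (i,j) - (\<Sum>l<N. Z $$ (l,j)) / real N"
proof -
  have "(centering_mat N * Z) $$ (i,j) = (\<Sum>l<N. ((if i = l then 1 else 0) - 1 / real N) * Z $$ (l,j))"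
    using Z i j by (simp add: centering_mat_def scalar_prod_def atLeast0LessThan)
  also have "\<dots> = (\<Sum>l<N. (if i = l then Z $$ (l,j) else 0)) - (\<Sum>l<N. Z $$ (l,j)) / real N"
  proof -
    have "(\<Sum>l<N. ((if i = l then 1 else 0) - 1 / real N) * Z $$ (l,j)) = (\<Sum>l<N. (if i = l then Z $$ (l,j) else 0) - Z $$ (l,j) / real N)"
      by (intro sum.cong refl) (auto simp: left_diff_distrib right_diff_distrib)
    thus ?thesis by (simp add: sum_subtractf sum_divide_distrib)
  qed
  also have "\<dots> = Z $$ (i,j) - (\<Sum>l<N. Z $$ (l,j)) / real N" using i by simp
  finally show ?thesis .
qed

lemma mult_Pi: assumes Z: "Z \<in> carrier_mat m N" and i: "i < m" and j: "j < N"
  shows "(Z * centering_mat N) $$ (i,j) = Z $$ (i,j) - (\<Sum>l<N. Z $$ (i,l)) / real N"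
proof -
  have "(Z * centering_mat N) $$ (i,j) = (\<Sum>l<N. Z $$ (i,l) * ((if l = j then 1 else 0) - 1 / real N))"
    using Z i j by (simp add: centering_mat_def scalar_prod_def atLeast0LessThan)
  also have "\<dots> = (\<Sum>l<N. (if l = j then Z $$ (i,l) else 0)) - (\<Sum>l<N. Z $$ (i,l)) / real N"
  proof -
    have "(\<Sum>l<N. Z $$ (i,l) * ((if l = j then 1 else 0) - 1 / real N)) = (\<Sum>l<N. (if l = j then Z $$ (i,l) else 0) - Z $$ (i,l) / real N)"
      by (intro sum.cong refl) (auto simp: left_diff_distrib right_diff_distrib)
    thus ?thesis by (simp add: sum_subtractf sum_divide_distrib)
  qed
  also have "\<dots> = Z $$ (i,j) - (\<Sum>l<N. Z $$ (i,l)) / real N" using j by simp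
  finally show ?thesis .
qed

lemma path_adj_dim[simp]: "dim_row (path_adj N) = N" "dim_col (path_adj N) = N"
  by (simp_all add: path_adj_def)

lemma path_adj_index: "i < N \<Longrightarrow> j < N \<Longrightarrow> path_adj N $$ (i,j) = (if i = j + 1 then 1 else 0)"
  by (simp add: path_adj_def)

lemma odm_dim[simp]: "dim_row (out_degree_mat A) = dim_row A" "dim_col (out_degree_mat A) = dim_row A"
  by (simp_all add: out_degree_mat_def)

lemma L_eq: "laplacian (path_adj N) = 1\<^sub>m N - Smat N"
proof (rule eq_matI)
  show "dim_row (laplacian (path_adj N)) = dim_row (1\<^sub>m N - Smat N)"
    by (simp add: laplacian_def out_degree_mat_def path_adj_def Smat_def)
  show "dim_col (laplacian (path_adj N)) = dim_col (1\<^sub>m N - Smat N)"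
    by (simp add: laplacian_def out_degree_mat_def path_adj_def Smat_def)
  fix i j assume i: "i < dim_row (1\<^sub>m N - Smat N)" and j: "j < dim_col (1\<^sub>m N - Smat N)"
  hence i: "i < N" and j: "j < N" by auto
  have deg: "(\<Sum>l<N. path_adj N $$ (i,l)) = (if i = 0 then 0 else 1)"
  proof -
    have "(\<Sum>l<N. path_adj N $$ (i,l)) = (\<Sum>l<N. if l = i - 1 \<and> i \<noteq> 0 then 1 else 0)"
      using i by (intro sum.cong) (auto simp: path_adj_index)
    also have "\<dots> = (if i = 0 then 0 else 1)" using i by (simp add: sum.delta)
    finally show ?thesis .
  qed
  have A1: "laplacian (path_adj N) $$ (i,j) = out_degree_mat (path_adj N) $$ (i,j) - path_adj N $$ (i,j)"
    using i j by (simp add: laplacian_def)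
  have A2: "out_degree_mat (path_adj N) $$ (i,j) = (if i = j then (\<Sum>l<N. path_adj N $$ (i,l)) else 0)"
    using i j by (simp add: out_degree_mat_def)
  have A3: "path_adj N $$ (i,j) = (if i = j + 1 then 1 else 0)"
    using i j by (simp add: path_adj_index)
  have A: "laplacian (path_adj N) $$ (i,j) = (if i = j then (if i = 0 then 0 else 1) else 0) - (if i = j + 1 then 1 else 0)"
    unfolding A1 A2 A3 deg ..
  have B: "(1\<^sub>m N - Smat N) $$ (i,j) = (if i = j then 1 else 0) - (if j = i - 1 then 1 else 0)"
    using i j by (simp add: Smat_def)
  have key: "((if i = j then (if i = 0 then 0 else 1) else 0) - (if i = j + 1 then 1 else 0) :: real) = (if i = j then 1 else 0) - (if j = i - 1 then 1 else 0)"
    by (cases i) auto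
  show "laplacian (path_adj N) $$ (i,j) = (1\<^sub>m N - Smat N) $$ (i,j)"
    unfolding A B by (rule key)
qed

lemma cent_dim[simp]: "dim_row (centering_mat N) = N" "dim_col (centering_mat N) = N"
  by (simp_all add: centering_mat_def)

lemmas multN = mult_carrier_mat[of _ N N _ N] for N
lemmas assocN = assoc_mult_mat[of _ N N _ N _ N] for N

lemma cent_colsum: "j < N \<Longrightarrow> (\<Sum>l<N. centering_mat N $$ (l,j)) = 0"
proof -
  assume j: "j < N"
  have "(\<Sum>l<N. centering_mat N $$ (l,j)) = (\<Sum>l<N. (if l = j then 1 else 0) - 1 / real N)"
    by (intro sum.cong refl) (simp add: cent_index j)
  also have "\<dots> = 1 - real N * (1 / real N)" using j by (simp add: sum_subtractf)
  also have "\<dots> = 0" using j by simp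
  finally show ?thesis .
qed

lemma cent_transpose: "transpose_mat (centering_mat N) = centering_mat N"
  by (rule eq_matI) (auto simp: cent_index)

lemma cent_idem: "centering_mat N * centering_mat N = centering_mat N"
  by (rule eq_matI) (auto simp: Pi_mult[of "centering_mat N" N N] cent_colsum simp del: index_mult_mat(1))

lemma colsum_zero: assumes Z: "Z \<in> carrier_mat N m" and P: "centering_mat N * Z = Z" and j: "j < m"
  shows "(\<Sum>l<N. Z $$ (l,j)) = 0"
proof (cases "N = 0")
  case True thus ?thesis by simp
next
  case False
  have "(centering_mat N * Z) $$ (0,j) = Z $$ (0,j) - (\<Sum>l<N. Z $$ (l,j)) / real N"
    using Pi_mult[OF Z _ j] False by simp
  hence "(\<Sum>l<N. Z $$ (l,j)) / real N = 0" using P by simp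
  thus ?thesis using False by simp
qed

definition Lf :: "nat \<Rightarrow> real mat \<Rightarrow> real mat" where
  "Lf N Z = centering_mat N * (Smat N * Z)"

definition Rf :: "nat \<Rightarrow> real mat \<Rightarrow> real mat" where
  "Rf N Z = (Z * transpose_mat (Smat N)) * centering_mat N"

lemma Lf_carrier: "Z \<in> carrier_mat N N \<Longrightarrow> Lf N Z \<in> carrier_mat N N"
  unfolding Lf_def by (simp add: multN)

lemma Rf_carrier: "Z \<in> carrier_mat N N \<Longrightarrow> Rf N Z \<in> carrier_mat N N"
  unfolding Rf_def by (simp add: multN)

lemma Lf_pow_carrier: "Z \<in> carrier_mat N N \<Longrightarrow> (Lf N ^^ a) Z \<in> carrier_mat N N"
  by (induction a) (auto simp: Lf_carrier)

lemma Rf_pow_carrier: "Z \<in> carrier_mat N N \<Longrightarrow> (Rf N ^^ a) Z \<in> carrier_mat N N"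
  by (induction a) (auto simp: Rf_carrier)

lemma Lf_add: "A \<in> carrier_mat N N \<Longrightarrow> B \<in> carrier_mat N N \<Longrightarrow> Lf N (A + B) = Lf N A + Lf N B"
  unfolding Lf_def by (simp add: mult_add_distrib_mat[of _ N N _ N] multN)

lemma Rf_add: "A \<in> carrier_mat N N \<Longrightarrow> B \<in> carrier_mat N N \<Longrightarrow> Rf N (A + B) = Rf N A + Rf N B"
  unfolding Rf_def by (simp add: add_mult_distrib_mat[of _ N N _ _ N] multN)

lemma Lf_smult: "A \<in> carrier_mat N N \<Longrightarrow> Lf N (c \<cdot>\<^sub>m A) = c \<cdot>\<^sub>m Lf N A"
  unfolding Lf_def by (simp add: mult_smult_distrib[of _ N N _ N] multN)

lemma Rf_smult: "A \<in> carrier_mat N N \<Longrightarrow> Rf N (c \<cdot>\<^sub>m A) = c \<cdot>\<^sub>m Rf N A"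
  unfolding Rf_def by (simp add: mult_smult_assoc_mat[of _ N N _ N] multN)

lemma Lf_pow_add: "A \<in> carrier_mat N N \<Longrightarrow> B \<in> carrier_mat N N \<Longrightarrow> (Lf N ^^ a) (A + B) = (Lf N ^^ a) A + (Lf N ^^ a) B"
  by (induction a) (auto simp: Lf_add Lf_pow_carrier)

lemma Rf_pow_add: "A \<in> carrier_mat N N \<Longrightarrow> B \<in> carrier_mat N N \<Longrightarrow> (Rf N ^^ a) (A + B) = (Rf N ^^ a) A + (Rf N ^^ a) B"
  by (induction a) (auto simp: Rf_add Rf_pow_carrier)

lemma Lf_pow_smult: "A \<in> carrier_mat N N \<Longrightarrow> (Lf N ^^ a) (c \<cdot>\<^sub>m A) = c \<cdot>\<^sub>m (Lf N ^^ a) A"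
  by (induction a) (auto simp: Lf_smult Lf_pow_carrier)

lemma Rf_pow_smult: "A \<in> carrier_mat N N \<Longrightarrow> (Rf N ^^ a) (c \<cdot>\<^sub>m A) = c \<cdot>\<^sub>m (Rf N ^^ a) A"
  by (induction a) (auto simp: Rf_smult Rf_pow_carrier)

lemma Lf_Rf_comm: assumes Z: "Z \<in> carrier_mat N N" shows "Lf N (Rf N Z) = Rf N (Lf N Z)"
proof -
  let ?P = "centering_mat N" and ?S = "Smat N" and ?T = "transpose_mat (Smat N)"
  have cP: "?P \<in> carrier_mat N N" and cS: "?S \<in> carrier_mat N N" and cT: "?T \<in> carrier_mat N N" by auto
  have cSZ: "?S * Z \<in> carrier_mat N N" using cS Z by (rule mult_carrier_mat)
  have cPSZ: "?P * (?S * Z) \<in> carrier_mat N N" using cP cSZ by (rule mult_carrier_mat)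
  have cTP: "?T * ?P \<in> carrier_mat N N" using cT cP by (rule mult_carrier_mat)
  have e1: "(Z * ?T) * ?P = Z * (?T * ?P)" using Z cT cP by (rule assoc_mult_mat)
  have e2: "((?P * (?S * Z)) * ?T) * ?P = (?P * (?S * Z)) * (?T * ?P)" using cPSZ cT cP by (rule assoc_mult_mat)
  have e3: "(?P * (?S * Z)) * (?T * ?P) = ?P * ((?S * Z) * (?T * ?P))" using cP cSZ cTP by (rule assoc_mult_mat)
  have e4: "(?S * Z) * (?T * ?P) = ?S * (Z * (?T * ?P))" using cS Z cTP by (rule assoc_mult_mat)
  show ?thesis unfolding Lf_def Rf_def e1 e2 e3 e4 ..
qed

lemma Lf_Rf_pow_comm: "Z \<in> carrier_mat N N \<Longrightarrow> Lf N ((Rf N ^^ b) Z) = (Rf N ^^ b) (Lf N Z)"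
  by (induction b) (auto simp: Lf_Rf_comm Rf_pow_carrier)

lemma Lf_Rf_pow_pow_comm: "Z \<in> carrier_mat N N \<Longrightarrow> (Lf N ^^ a) ((Rf N ^^ b) Z) = (Rf N ^^ b) ((Lf N ^^ a) Z)"
  by (induction a) (auto simp: Lf_Rf_pow_comm Lf_pow_carrier)

lemma Lf_leftP: assumes Z: "Z \<in> carrier_mat N N" shows "centering_mat N * Lf N Z = Lf N Z"
proof -
  have cSZ: "Smat N * Z \<in> carrier_mat N N" using Smat_carrier Z by (rule mult_carrier_mat)
  have "centering_mat N * Lf N Z = (centering_mat N * centering_mat N) * (Smat N * Z)"
    unfolding Lf_def using cent_carrier cent_carrier cSZ by (rule assoc_mult_mat[symmetric])
  thus ?thesis by (simp add: cent_idem Lf_def)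
qed

lemma Rf_leftP: assumes Z: "Z \<in> carrier_mat N N" and P: "centering_mat N * Z = Z"
  shows "centering_mat N * Rf N Z = Rf N Z"
proof -
  let ?P = "centering_mat N" and ?T = "transpose_mat (Smat N)"
  have cT: "?T \<in> carrier_mat N N" by simp
  have cZT: "Z * ?T \<in> carrier_mat N N" using Z cT by (rule mult_carrier_mat)
  have "?P * ((Z * ?T) * ?P) = (?P * (Z * ?T)) * ?P"
    using cent_carrier cZT cent_carrier by (rule assoc_mult_mat[symmetric])
  also have "?P * (Z * ?T) = (?P * Z) * ?T"
    using cent_carrier Z cT by (rule assoc_mult_mat[symmetric])
  finally show ?thesis by (simp add: P Rf_def)
qed

lemma Lf_rightP: assumes Z: "Z \<in> carrier_mat N N" and P: "Z * centering_mat N = Z"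
  shows "Lf N Z * centering_mat N = Lf N Z"
proof -
  let ?P = "centering_mat N" and ?S = "Smat N"
  have cSZ: "?S * Z \<in> carrier_mat N N" using Smat_carrier Z by (rule mult_carrier_mat)
  have "(?P * (?S * Z)) * ?P = ?P * ((?S * Z) * ?P)"
    using cent_carrier cSZ cent_carrier by (rule assoc_mult_mat)
  also have "(?S * Z) * ?P = ?S * (Z * ?P)"
    using Smat_carrier Z cent_carrier by (rule assoc_mult_mat)
  finally show ?thesis by (simp add: P Lf_def)
qed

lemma Rf_pow_leftP: "Z \<in> carrier_mat N N \<Longrightarrow> centering_mat N * Z = Z \<Longrightarrow> centering_mat N * (Rf N ^^ b) Z = (Rf N ^^ b) Z"
  by (induction b) (auto simp: Rf_leftP Rf_pow_carrier)

lemma Lf_pow_rightP: "Z \<in> carrier_mat N N \<Longrightarrow> Z * centering_mat N = Z \<Longrightarrow> (Lf N ^^ b) Z * centering_mat N = (Lf N ^^ b) Z"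
  by (induction b) (auto simp: Lf_rightP Lf_pow_carrier)

lemma Rf_transpose: "Z \<in> carrier_mat N N \<Longrightarrow> Rf N Z = transpose_mat (Lf N (transpose_mat Z))"
  unfolding Lf_def Rf_def
  by (simp add: transpose_mult[of _ N N _ N] multN cent_transpose)

lemma Rf_pow_transpose: "Z \<in> carrier_mat N N \<Longrightarrow> (Rf N ^^ b) Z = transpose_mat ((Lf N ^^ b) (transpose_mat Z))"
proof (induction b)
  case 0 thus ?case by simp
next
  case (Suc b)
  have c: "(Lf N ^^ b) (transpose_mat Z) \<in> carrier_mat N N" using Suc.prems by (simp add: Lf_pow_carrier)
  have "(Rf N ^^ Suc b) Z = Rf N ((Rf N ^^ b) Z)" by simp
  also have "\<dots> = Rf N (transpose_mat ((Lf N ^^ b) (transpose_mat Z)))" using Suc by simp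
  also have "\<dots> = transpose_mat (Lf N ((Lf N ^^ b) (transpose_mat Z)))"
    using c by (simp add: Rf_transpose)
  finally show ?case by simp
qed

lemma Lf_flag:
  assumes Z: "Z \<in> carrier_mat N N" and P: "centering_mat N * Z = Z"
  shows "(\<forall>j<N. \<forall>i<N. i \<le> a \<longrightarrow> ((Lf N ^^ a) Z) $$ (i,j) = ((Lf N ^^ a) Z) $$ (0,j))
         \<and> centering_mat N * (Lf N ^^ a) Z = (Lf N ^^ a) Z"
proof (induction a)
  case 0 show ?case using P by auto
next
  case (Suc a)
  let ?W = "(Lf N ^^ a) Z"
  have cW: "?W \<in> carrier_mat N N" using Z by (rule Lf_pow_carrier)
  have cSW: "Smat N * ?W \<in> carrier_mat N N" using Smat_carrier cW by (rule mult_carrier_mat)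
  have ent: "(Lf N ?W) $$ (i,j) = ?W $$ (i - 1, j) - (\<Sum>l<N. (Smat N * ?W) $$ (l,j)) / real N"
    if "i < N" "j < N" for i j
  proof -
    have "Lf N ?W = centering_mat N * (Smat N * ?W)" by (rule Lf_def)
    thus ?thesis using Pi_mult[OF cSW that] S_mult[OF cW that] by simp
  qed
  have A: "\<forall>j<N. \<forall>i<N. i \<le> Suc a \<longrightarrow> (Lf N ?W) $$ (i,j) = (Lf N ?W) $$ (0,j)"
  proof (intro allI impI)
    fix j i assume j: "j < N" and i: "i < N" and ia: "i \<le> Suc a"
    have i1: "i - 1 < N" "i - 1 \<le> a" using i ia by auto
    have "?W $$ (i - 1, j) = ?W $$ (0,j)" using Suc.IH[THEN conjunct1, rule_format, OF j i1] .
    thus "(Lf N ?W) $$ (i,j) = (Lf N ?W) $$ (0,j)" using ent[OF i j] ent[of 0 j] i j by simp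
  qed
  have B: "centering_mat N * Lf N ?W = Lf N ?W" using cW by (rule Lf_leftP)
  have eqW: "(Lf N ^^ Suc a) Z = Lf N ?W" by simp
  show ?case unfolding eqW using A B by blast
qed

lemma Lf_pow_zero:
  assumes Z: "Z \<in> carrier_mat N N" and P: "centering_mat N * Z = Z" and a: "N - 1 \<le> a"
  shows "(Lf N ^^ a) Z = 0\<^sub>m N N"
proof -
  let ?W = "(Lf N ^^ a) Z"
  have cW: "?W \<in> carrier_mat N N" using Z by (rule Lf_pow_carrier)
  note F = Lf_flag[OF Z P, of a]
  have fl: "?W $$ (i,j) = ?W $$ (0,j)" if "i < N" "j < N" for i j
  proof -
    have "i \<le> a" using that a by auto
    thus ?thesis using F[THEN conjunct1, rule_format, OF that(2) that(1)] by blast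
  qed
  have PW: "centering_mat N * ?W = ?W" using F by blast
  show ?thesis
  proof (rule eq_matI)
    fix i j assume "i < dim_row (0\<^sub>m N N :: real mat)" "j < dim_col (0\<^sub>m N N :: real mat)"
    hence i: "i < N" and j: "j < N" by auto
    have "(\<Sum>l<N. ?W $$ (l,j)) = 0" using colsum_zero[OF cW PW j] .
    moreover have "(\<Sum>l<N. ?W $$ (l,j)) = (\<Sum>l<N. ?W $$ (0,j))"
      using fl j by (intro sum.cong refl) blast
    moreover have "(\<Sum>l<N. ?W $$ (0,j)) = real N * ?W $$ (0,j)" by simp
    ultimately have "?W $$ (0,j) = 0" using i by (metis mult_eq_0_iff of_nat_eq_0_iff not_less0)
    thus "?W $$ (i,j) = 0\<^sub>m N N $$ (i,j)" using fl[OF i j] i j by simp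
  qed (use cW in auto)
qed

lemma transpose_P: assumes Z: "Z \<in> carrier_mat N N" and P: "Z * centering_mat N = Z"
  shows "centering_mat N * transpose_mat Z = transpose_mat Z"
proof -
  have "transpose_mat (Z * centering_mat N) = centering_mat N * transpose_mat Z"
    using transpose_mult[OF Z cent_carrier] cent_transpose by simp
  thus ?thesis using P by simp
qed

lemma uniq:
  assumes E: "E \<in> carrier_mat N N" and PE: "centering_mat N * E = E" and EP: "E * centering_mat N = E"
    and eq: "E = (1/2) \<cdot>\<^sub>m (Lf N E + Rf N E)"
  shows "E = 0\<^sub>m N N"
proof -
  define M where "M a b = (Lf N ^^ a) ((Rf N ^^ b) E)" for a b
  have zero: "M a b = 0\<^sub>m N N" if "N - 1 \<le> a \<or> N - 1 \<le> b" for a b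
  proof (cases "N - 1 \<le> a")
    case True
    show ?thesis unfolding M_def
      by (rule Lf_pow_zero[OF Rf_pow_carrier[OF E] Rf_pow_leftP[OF E PE] True])
  next
    case False
    hence b: "N - 1 \<le> b" using that by auto
    let ?W = "(Lf N ^^ a) E"
    have cW: "?W \<in> carrier_mat N N" using E by (rule Lf_pow_carrier)
    have WP: "?W * centering_mat N = ?W" using E EP by (rule Lf_pow_rightP)
    have "M a b = (Rf N ^^ b) ?W" unfolding M_def using E by (rule Lf_Rf_pow_pow_comm)
    also have "\<dots> = transpose_mat ((Lf N ^^ b) (transpose_mat ?W))" using cW by (rule Rf_pow_transpose)
    also have "(Lf N ^^ b) (transpose_mat ?W) = 0\<^sub>m N N"
      using cW transpose_P[OF cW WP] b by (intro Lf_pow_zero) auto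
    finally show ?thesis by simp
  qed
  have rec: "M a b = (1/2) \<cdot>\<^sub>m (M (Suc a) b + M a (Suc b))" for a b
  proof -
    have cL: "Lf N E \<in> carrier_mat N N" using E by (rule Lf_carrier)
    have cR: "Rf N E \<in> carrier_mat N N" using E by (rule Rf_carrier)
    have cLR: "Lf N E + Rf N E \<in> carrier_mat N N" using cL cR by simp
    have c1: "(Rf N ^^ b) (Lf N E) \<in> carrier_mat N N" using cL by (rule Rf_pow_carrier)
    have c2: "(Rf N ^^ b) (Rf N E) \<in> carrier_mat N N" using cR by (rule Rf_pow_carrier)
    have "M a b = (Lf N ^^ a) ((Rf N ^^ b) ((1/2) \<cdot>\<^sub>m (Lf N E + Rf N E)))"
      unfolding M_def by (rule arg_cong[where f="\<lambda>X. (Lf N ^^ a) ((Rf N ^^ b) X)", OF eq])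
    also have "\<dots> = (1/2) \<cdot>\<^sub>m ((Lf N ^^ a) ((Rf N ^^ b) (Lf N E)) + (Lf N ^^ a) ((Rf N ^^ b) (Rf N E)))"
      using cL cR cLR c1 c2 by (simp add: Rf_pow_smult Rf_pow_add Lf_pow_smult Lf_pow_add Rf_pow_carrier)
    also have "(Rf N ^^ b) (Lf N E) = Lf N ((Rf N ^^ b) E)"
      using E by (rule Lf_Rf_pow_comm[symmetric])
    also have "(Lf N ^^ a) (Lf N ((Rf N ^^ b) E)) = M (Suc a) b"
      unfolding M_def by (simp add: funpow_Suc_right del: funpow.simps)
    also have "(Lf N ^^ a) ((Rf N ^^ b) (Rf N E)) = M a (Suc b)"
      unfolding M_def by (simp add: funpow_Suc_right del: funpow.simps)
    finally show ?thesis .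
  qed
  have main: "\<forall>a b. 2 * N \<le> a + b + d \<longrightarrow> M a b = 0\<^sub>m N N" for d
  proof (induction d)
    case 0
    show ?case
    proof (intro allI impI)
      fix a b assume "2 * N \<le> a + b + 0"
      hence "N - 1 \<le> a \<or> N - 1 \<le> b" by arith
      thus "M a b = 0\<^sub>m N N" by (rule zero)
    qed
  next
    case (Suc d)
    show ?case
    proof (intro allI impI)
      fix a b assume h: "2 * N \<le> a + b + Suc d"
      have "M (Suc a) b = 0\<^sub>m N N" using Suc.IH h by auto
      moreover have "M a (Suc b) = 0\<^sub>m N N" using Suc.IH h by auto
      ultimately show "M a b = 0\<^sub>m N N" using rec[of a b] by simp
    qed
  qed
  have "M 0 0 = 0\<^sub>m N N" using main[of "2 * N"] by simp
  thus ?thesis unfolding M_def by simp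
qed

definition fN :: "nat \<Rightarrow> nat \<Rightarrow> nat \<Rightarrow> real" where
  "fN N k j = (2 * real N ^ 2 + 3 * real N + 1 + 3 * real (k+1) ^ 2 + 3 * real (j+1) ^ 2
       - 3 * (real N + 1) * real (k+1) - 3 * (real N + 1) * real (j+1)) / (3 * real N)
     - \<bar>real (k+1) - real (j+1)\<bar>"

lemma fN_sym: "fN N k j = fN N j k"
  unfolding fN_def by (simp add: abs_minus_commute algebra_simps)

lemma fN_alt: "N > 0 \<Longrightarrow> fN N k j = (2 * real N ^ 2 + 3 * real N + 1 + 3 * (real k + 1) ^ 2 + 3 * (real j + 1) ^ 2
       - 3 * (real N + 1) * (real k + 1) - 3 * (real N + 1) * (real j + 1)) / (3 * real N) - \<bar>real k - real j\<bar>"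
  unfolding fN_def by (simp add: algebra_simps)

lemma Fid:
  assumes N: "N > 0" and i: "i < N" and j: "j < N"
  shows "2 * fN N i j - fN N (i - 1) j - fN N i (j - 1)
       = (if i = j then 2 else 0) + (2 * real i - real N) / real N + (2 * real j - real N) / real N"
proof -
  have Nr: "real N > 0" using N by simp
  consider "i = 0" "j = 0" | "i = 0" "j > 0" | "i > 0" "j = 0" | "i > 0" "j > 0" "i < j" | "i > 0" "j > 0" "i = j" | "i > 0" "j > 0" "i > j"
    by force
  thus ?thesis
  proof cases
    case 1 thus ?thesis using Nr by (simp add: field_simps)
  next
    case 2
    hence "real (j - 1) = real j - 1" by (simp add: of_nat_diff)
    thus ?thesis using 2 Nr by (simp add: fN_alt[OF N] field_simps power2_eq_square)
  next
    case 3
    hence "real (i - 1) = real i - 1" by (simp add: of_nat_diff)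
    thus ?thesis using 3 Nr by (simp add: fN_alt[OF N] field_simps power2_eq_square)
  next
    case 4
    hence a: "real (i - 1) = real i - 1" "real (j - 1) = real j - 1" by (simp_all add: of_nat_diff)
    have b: "real i + 1 \<le> real j" using 4 by simp
    have c: "\<bar>real i - real j\<bar> = real j - real i" "\<bar>real i - 1 - real j\<bar> = real j - real i + 1"
      "\<bar>real i - (real j - 1)\<bar> = real j - real i - 1" using b by auto
    show ?thesis using 4 Nr by (simp add: fN_alt[OF N] a c field_simps power2_eq_square)
  next
    case 5
    hence a: "real (i - 1) = real i - 1" "real (j - 1) = real j - 1" by (simp_all add: of_nat_diff)
    have c: "\<bar>real i - 1 - real j\<bar> = 1" "\<bar>real i - (real j - 1)\<bar> = 1" using 5 by auto
    show ?thesis using 5 Nr by (simp add: fN_alt[OF N] a c field_simps power2_eq_square)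
  next
    case 6
    hence a: "real (i - 1) = real i - 1" "real (j - 1) = real j - 1" by (simp_all add: of_nat_diff)
    have b: "real j + 1 \<le> real i" using 6 by simp
    have c: "\<bar>real i - real j\<bar> = real i - real j" "\<bar>real i - 1 - real j\<bar> = real i - real j - 1"
      "\<bar>real i - (real j - 1)\<bar> = real i - real j + 1" using b by auto
    show ?thesis using 6 Nr by (simp add: fN_alt[OF N] a c field_simps power2_eq_square)
  qed
qed

lemma sum_id: "(\<Sum>j<N. real j) = real N * (real N - 1) / 2"
  by (induction N) (auto simp: field_simps)

lemma sum_sq: "(\<Sum>j<N. (real j)^2) = real N * (real N - 1) * (2 * real N - 1) / 6"
  by (induction N) (auto simp: field_simps power2_eq_square)

lemma sum_abs: "k < N \<Longrightarrow> (\<Sum>j<N. \<bar>real k - real j\<bar>) = (real k * (real k + 1) + (real N - 1 - real k) * (real N - real k)) / 2"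
proof (induction N arbitrary: k)
  case 0 thus ?case by simp
next
  case (Suc N)
  show ?case
  proof (cases "k < N")
    case True
    have "\<bar>real k - real N\<bar> = real N - real k" using True by simp
    thus ?thesis using Suc.IH[OF True] by (simp add: field_simps)
  next
    case False
    hence k: "k = N" using Suc.prems by simp
    have "(\<Sum>j<N. \<bar>real k - real j\<bar>) = (\<Sum>j<N. real N - real j)"
      using k by (intro sum.cong refl) auto
    also have "\<dots> = real N * real N - real N * (real N - 1) / 2"
      by (simp add: sum_subtractf sum_id)
    finally show ?thesis using k by (simp add: field_simps)
  qed
qed

lemma fN_rowsum: assumes k: "k < N" shows "(\<Sum>j<N. fN N k j) = 0"
proof -
  have N: "N > 0" using k by simp
  have Nr: "real N > 0" using N by simp
  define a0 where "a0 = (2 * real N ^ 2 + 3 * real N + 1 + 3 * (real k + 1) ^ 2 - 3 * (real N + 1) * (real k + 1) + 3 - 3 * (real N + 1)) / (3 * real N)"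
  define a1 where "a1 = (6 - 3 * (real N + 1)) / (3 * real N)"
  define a2 where "a2 = 3 / (3 * real N)"
  have e: "fN N k j = a0 + a1 * real j + a2 * (real j)^2 - \<bar>real k - real j\<bar>" for j
    unfolding fN_alt[OF N] a0_def a1_def a2_def using Nr by (simp add: field_simps power2_eq_square)
  have "(\<Sum>j<N. fN N k j) = real N * a0 + a1 * (\<Sum>j<N. real j) + a2 * (\<Sum>j<N. (real j)^2) - (\<Sum>j<N. \<bar>real k - real j\<bar>)"
    unfolding e by (simp add: sum.distrib sum_subtractf sum_distrib_left)
  also have "\<dots> = 0"
    unfolding sum_id sum_sq sum_abs[OF k] a0_def a1_def a2_def using Nr by (simp add: field_simps power2_eq_square)
  finally show ?thesis .
qed


lemma Lf_minus: "A \<in> carrier_mat N N \<Longrightarrow> B \<in> carrier_mat N N \<Longrightarrow> Lf N (A - B) = Lf N A - Lf N B"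
  unfolding Lf_def by (simp add: mult_minus_distrib_mat[where nr=N and n=N and nc=N] multN)

lemma Rf_minus: "A \<in> carrier_mat N N \<Longrightarrow> B \<in> carrier_mat N N \<Longrightarrow> Rf N (A - B) = Rf N A - Rf N B"
  unfolding Rf_def by (simp add: minus_mult_distrib_mat[where nr=N and n=N and nc=N] multN)

definition Fm :: "nat \<Rightarrow> real mat" where
  "Fm N = mat N N (\<lambda>(k,j). fN N k j)"

lemma Fm_carrier[simp]: "Fm N \<in> carrier_mat N N"
  by (simp add: Fm_def)

lemma Fm_dim[simp]: "dim_row (Fm N) = N" "dim_col (Fm N) = N"
  by (simp_all add: Fm_def)

lemma Fm_index: "i < N \<Longrightarrow> j < N \<Longrightarrow> Fm N $$ (i,j) = fN N i j"
  by (simp add: Fm_def)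

lemma fN_colsum: assumes j: "j < N" shows "(\<Sum>l<N. fN N l j) = 0"
  using fN_rowsum[OF j] by (simp add: fN_sym[of N _ j])

lemma PF: "centering_mat N * Fm N = Fm N"
  by (rule eq_matI) (auto simp: Pi_mult[OF Fm_carrier] Fm_index fN_colsum simp del: index_mult_mat(1))

lemma FP: "Fm N * centering_mat N = Fm N"
  by (rule eq_matI) (auto simp: mult_Pi[OF Fm_carrier] Fm_index fN_rowsum simp del: index_mult_mat(1))

lemma shifted_sum: assumes j: "j < N"
  shows "(\<Sum>l<N. fN N (l - 1) j) = real N - 1 - 2 * real j"
proof -
  obtain M where M: "N = Suc M" using j by (cases N) auto
  have "(\<Sum>l<N. fN N (l - 1) j) = fN N 0 j + (\<Sum>l<M. fN N l j)"
    unfolding M by (subst sum.lessThan_Suc_shift) simp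
  also have "(\<Sum>l<M. fN N l j) = (\<Sum>l<N. fN N l j) - fN N M j"
    unfolding M by simp
  also have "(\<Sum>l<N. fN N l j) = 0" using fN_colsum[OF j] .
  also have "fN N 0 j + (0 - fN N M j) = real N - 1 - 2 * real j"
  proof -
    have N: "N > 0" using j by simp
    have rM: "real M = real N - 1" using M by simp
    have jM: "real j \<le> real N - 1" using j by simp
    have a: "\<bar>real M - real j\<bar> = real N - 1 - real j" using rM jM by simp
    have b: "\<bar>0 - real j\<bar> = real j" by simp
    have a2: "\<bar>real N - (1 + real j)\<bar> = real N - 1 - real j" using jM by simp
    show ?thesis using N a2 unfolding fN_alt[OF N] a rM
      by (simp add: field_simps power2_eq_square)
  qed
  finally show ?thesis .
qed

lemma F_eq: assumes i: "i < N" and j: "j < N"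
  shows "2 * Fm N $$ (i,j) - Lf N (Fm N) $$ (i,j) - Rf N (Fm N) $$ (i,j) = 2 * centering_mat N $$ (i,j)"
proof -
  have N: "N > 0" using i by simp
  have cSF: "Smat N * Fm N \<in> carrier_mat N N" by (rule mult_carrier_mat) auto
  have cFT: "Fm N * transpose_mat (Smat N) \<in> carrier_mat N N" by (rule mult_carrier_mat) auto
  have L: "Lf N (Fm N) $$ (i,j) = fN N (i - 1) j - (real N - 1 - 2 * real j) / real N"
  proof -
    have "Lf N (Fm N) $$ (i,j) = (Smat N * Fm N) $$ (i,j) - (\<Sum>l<N. (Smat N * Fm N) $$ (l,j)) / real N"
      unfolding Lf_def using Pi_mult[OF cSF i j] .
    also have "(\<Sum>l<N. (Smat N * Fm N) $$ (l,j)) = (\<Sum>l<N. fN N (l - 1) j)"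
      by (intro sum.cong refl) (simp add: S_mult[OF Fm_carrier _ j] Fm_index j del: index_mult_mat(1))
    finally show ?thesis using S_mult[OF Fm_carrier i j] Fm_index i j shifted_sum[OF j] by simp
  qed
  have R: "Rf N (Fm N) $$ (i,j) = fN N i (j - 1) - (real N - 1 - 2 * real i) / real N"
  proof -
    have "Rf N (Fm N) $$ (i,j) = (Fm N * transpose_mat (Smat N)) $$ (i,j) - (\<Sum>l<N. (Fm N * transpose_mat (Smat N)) $$ (i,l)) / real N"
      unfolding Rf_def using mult_Pi[OF cFT i j] .
    also have "(\<Sum>l<N. (Fm N * transpose_mat (Smat N)) $$ (i,l)) = (\<Sum>l<N. fN N (l - 1) i)"
      by (intro sum.cong refl) (simp add: mult_ST[OF Fm_carrier i] Fm_index i fN_sym[of N i] del: index_mult_mat(1))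
    finally show ?thesis using mult_ST[OF Fm_carrier i j] Fm_index i j shifted_sum[OF i] by simp
  qed
  show ?thesis
    unfolding L R Fm_index[OF i j] cent_index[OF i j] using Fid[OF N i j] N
    by (simp add: field_simps)
qed


theorem lemma5:
  fixes N :: nat and Q \<Sigma> :: "real mat"
  assumes "Q \<in> carrier_mat (N - 1) N"
    and "Q *\<^sub>v (vec N (\<lambda>_. 1)) = 0\<^sub>v (N - 1)"
    and "Q * transpose_mat Q = 1\<^sub>m (N - 1)"
    and "transpose_mat Q * Q = centering_mat N"
    and "\<Sigma> \<in> carrier_mat (N - 1) (N - 1)"
    and "(Q * laplacian (path_adj N) * transpose_mat Q) * \<Sigma>
         + \<Sigma> * transpose_mat (Q * laplacian (path_adj N) * transpose_mat Q) = 1\<^sub>m (N - 1)"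
  shows "\<forall>k<N. \<forall>j<N. X_mat Q \<Sigma> $$ (k, j) =
     (2 * real N ^ 2 + 3 * real N + 1 + 3 * real (k+1) ^ 2 + 3 * real (j+1) ^ 2
       - 3 * (real N + 1) * real (k+1) - 3 * (real N + 1) * real (j+1)) / (3 * real N)
     - \<bar>real (k+1) - real (j+1)\<bar>"
proof -
  define n where "n = N - 1"
  define T where "T = transpose_mat Q"
  define L where "L = laplacian (path_adj N)"
  define P where "P = centering_mat N"
  define Y where "Y = T * \<Sigma> * Q"
  have cQ: "Q \<in> carrier_mat n N" using assms(1) unfolding n_def .
  have cT: "T \<in> carrier_mat N n" using cQ unfolding T_def by simp
  have cSig: "\<Sigma> \<in> carrier_mat n n" using assms(5) unfolding n_def .
  have cL: "L \<in> carrier_mat N N" unfolding L_def L_eq by (rule minus_carrier_mat) simp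
  have cLT: "transpose_mat L \<in> carrier_mat N N" using cL by simp
  have cP: "P \<in> carrier_mat N N" unfolding P_def by simp
  have QT: "Q * T = 1\<^sub>m n" using assms(3) unfolding n_def T_def .
  have TQ: "T * Q = P" using assms(4) unfolding P_def T_def .
  note mc = mult_carrier_mat[of _ N N _ N] mult_carrier_mat[of _ N N _ n] mult_carrier_mat[of _ N n _ N]
    mult_carrier_mat[of _ N n _ n] mult_carrier_mat[of _ n N _ N] mult_carrier_mat[of _ n N _ n]
    mult_carrier_mat[of _ n n _ N] mult_carrier_mat[of _ n n _ n]
  note ac =
    assoc_mult_mat[of _ N N _ N _ N] assoc_mult_mat[of _ N N _ N _ n] assoc_mult_mat[of _ N N _ n _ N] assoc_mult_mat[of _ N N _ n _ n]
    assoc_mult_mat[of _ N n _ N _ N] assoc_mult_mat[of _ N n _ N _ n] assoc_mult_mat[of _ N n _ n _ N] assoc_mult_mat[of _ N n _ n _ n]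
    assoc_mult_mat[of _ n N _ N _ N] assoc_mult_mat[of _ n N _ N _ n] assoc_mult_mat[of _ n N _ n _ N] assoc_mult_mat[of _ n N _ n _ n]
    assoc_mult_mat[of _ n n _ N _ N] assoc_mult_mat[of _ n n _ N _ n] assoc_mult_mat[of _ n n _ n _ N] assoc_mult_mat[of _ n n _ n _ n]
  have QTX: "Q * (T * X) = X" if X: "X \<in> carrier_mat n m" for X m
  proof -
    have "Q * (T * X) = (Q * T) * X" using cQ cT X by (rule assoc_mult_mat[symmetric])
    thus ?thesis using QT X by simp
  qed
  have cY: "Y \<in> carrier_mat N N" unfolding Y_def using cT cSig cQ by (simp add: mc)
  have PY: "P * Y = Y"
  proof -
    have "(T * Q) * Y = T * \<Sigma> * Q"
      unfolding Y_def using cT cSig cQ by (simp add: ac mc QTX[where m=N])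
    thus ?thesis unfolding TQ Y_def .
  qed
  have YP: "Y * P = Y"
  proof -
    have "Y * (T * Q) = T * \<Sigma> * Q"
      unfolding Y_def using cT cSig cQ by (simp add: ac mc QTX[where m=N])
    thus ?thesis unfolding TQ Y_def .
  qed
  have star: "P * L * Y + Y * transpose_mat L * P = P"
  proof -
    let ?Lb = "Q * L * T"
    have trLb: "transpose_mat ?Lb = Q * (transpose_mat L * T)"
    proof -
      have "transpose_mat ((Q * L) * T) = transpose_mat T * transpose_mat (Q * L)"
        using cQ cL cT by (intro transpose_mult) (auto simp: mc)
      also have "transpose_mat (Q * L) = transpose_mat L * transpose_mat Q"
        using cQ cL by (rule transpose_mult)
      finally show ?thesis unfolding T_def by simp
    qed
    have h: "?Lb * \<Sigma> + \<Sigma> * transpose_mat ?Lb = 1\<^sub>m n"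
      using assms(6) unfolding n_def L_def T_def .
    have c1: "?Lb * \<Sigma> \<in> carrier_mat n n" using cQ cL cT cSig by (simp add: mc)
    have c2: "\<Sigma> * transpose_mat ?Lb \<in> carrier_mat n n" unfolding trLb using cQ cLT cT cSig by (simp add: mc)
    have "T * (?Lb * \<Sigma> + \<Sigma> * transpose_mat ?Lb) * Q = T * (?Lb * \<Sigma>) * Q + T * (\<Sigma> * transpose_mat ?Lb) * Q"
      using c1 c2 cT cQ by (simp add: mult_add_distrib_mat[OF cT c1 c2] add_mult_distrib_mat[of _ N n _ _ N] mc)
    also have "T * (?Lb * \<Sigma>) * Q = (T * Q) * L * Y"
      unfolding Y_def using cT cSig cQ cL by (simp add: ac mc)
    also have "T * (\<Sigma> * transpose_mat ?Lb) * Q = Y * transpose_mat L * (T * Q)"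
      unfolding Y_def trLb using cT cSig cQ cLT by (simp add: ac mc)
    finally have "T * (?Lb * \<Sigma> + \<Sigma> * transpose_mat ?Lb) * Q = P * L * Y + Y * transpose_mat L * P"
      unfolding TQ .
    moreover have "T * (?Lb * \<Sigma> + \<Sigma> * transpose_mat ?Lb) * Q = P"
      unfolding h using cT TQ by simp
    ultimately show ?thesis by simp
  qed
  have LfY: "P * L * Y = Y - Lf N Y"
  proof -
    have "P * L = P - P * Smat N" unfolding L_eq L_def using cP
      by (simp add: mult_minus_distrib_mat[where nr=N and n=N and nc=N])
    hence "P * L * Y = (P - P * Smat N) * Y" by simp
    also have "\<dots> = P * Y - (P * Smat N) * Y"
      using cP cY by (simp add: minus_mult_distrib_mat[where nr=N and n=N and nc=N] multN)
    also have "(P * Smat N) * Y = Lf N Y" unfolding Lf_def P_def by (rule assoc_mult_mat[OF cent_carrier Smat_carrier cY])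
    finally show ?thesis using PY by simp
  qed
  have RfY: "Y * transpose_mat L * P = Y - Rf N Y"
  proof -
    have tL: "transpose_mat L = 1\<^sub>m N - transpose_mat (Smat N)" unfolding L_def L_eq
      by (simp add: transpose_minus[of _ N N])
    have "Y * transpose_mat L = Y - Y * transpose_mat (Smat N)" unfolding tL using cY
      by (simp add: mult_minus_distrib_mat[where nr=N and n=N and nc=N])
    hence "Y * transpose_mat L * P = (Y - Y * transpose_mat (Smat N)) * P" by simp
    also have "\<dots> = Y * P - (Y * transpose_mat (Smat N)) * P"
      using cP cY by (simp add: minus_mult_distrib_mat[where nr=N and n=N and nc=N] multN)
    also have "(Y * transpose_mat (Smat N)) * P = Rf N Y" unfolding Rf_def P_def ..
    finally show ?thesis using YP by simp
  qed
  have cLfY: "Lf N Y \<in> carrier_mat N N" using cY by (rule Lf_carrier)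
  have cRfY: "Rf N Y \<in> carrier_mat N N" using cY by (rule Rf_carrier)
  have Yeq: "2 * Y $$ (i,j) - Lf N Y $$ (i,j) - Rf N Y $$ (i,j) = P $$ (i,j)" if "i < N" "j < N" for i j
  proof -
    have "(Y - Lf N Y + (Y - Rf N Y)) $$ (i,j) = P $$ (i,j)" using star unfolding LfY RfY by simp
    thus ?thesis using that cY cLfY cRfY by simp
  qed
  define E where "E = 2 \<cdot>\<^sub>m Y - Fm N"
  have cE: "E \<in> carrier_mat N N" unfolding E_def by (rule minus_carrier_mat) simp
  have PE: "centering_mat N * E = E"
  proof -
    have "P * E = 2 \<cdot>\<^sub>m (P * Y) - P * Fm N" unfolding E_def using cP cY
      by (simp add: mult_minus_distrib_mat[where nr=N and n=N and nc=N] mult_smult_distrib[of _ N N _ N])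
    thus ?thesis using PY PF unfolding P_def E_def by simp
  qed
  have EP: "E * centering_mat N = E"
  proof -
    have "E * P = 2 \<cdot>\<^sub>m (Y * P) - Fm N * P" unfolding E_def using cP cY
      by (simp add: minus_mult_distrib_mat[where nr=N and n=N and nc=N] mult_smult_assoc_mat[of _ N N _ N])
    thus ?thesis using YP FP unfolding P_def E_def by simp
  qed
  have LfE: "Lf N E = 2 \<cdot>\<^sub>m Lf N Y - Lf N (Fm N)" unfolding E_def using cY
    by (simp add: Lf_minus Lf_smult)
  have RfE: "Rf N E = 2 \<cdot>\<^sub>m Rf N Y - Rf N (Fm N)" unfolding E_def using cY
    by (simp add: Rf_minus Rf_smult)
  have cLfF: "Lf N (Fm N) \<in> carrier_mat N N" by (rule Lf_carrier) simp
  have cRfF: "Rf N (Fm N) \<in> carrier_mat N N" by (rule Rf_carrier) simp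
  have Eeq: "E = (1/2) \<cdot>\<^sub>m (Lf N E + Rf N E)"
  proof (rule eq_matI)
    fix i j assume "i < dim_row ((1/2) \<cdot>\<^sub>m (Lf N E + Rf N E))" "j < dim_col ((1/2) \<cdot>\<^sub>m (Lf N E + Rf N E))"
    hence i: "i < N" and j: "j < N" unfolding LfE RfE using cLfY cRfF cLfF cRfY by auto
    have a: "((1/2) \<cdot>\<^sub>m (Lf N E + Rf N E)) $$ (i,j)
      = (1/2) * (2 * Lf N Y $$ (i,j) - Lf N (Fm N) $$ (i,j) + (2 * Rf N Y $$ (i,j) - Rf N (Fm N) $$ (i,j)))"
      unfolding LfE RfE using i j cLfY cRfY cLfF cRfF by simp
    have b: "E $$ (i,j) = 2 * Y $$ (i,j) - Fm N $$ (i,j)" unfolding E_def using i j cY by simp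
    show "E $$ (i,j) = ((1/2) \<cdot>\<^sub>m (Lf N E + Rf N E)) $$ (i,j)"
      unfolding a b using Yeq[OF i j] F_eq[OF i j] unfolding P_def by simp
  qed (use cE cLfY cRfF cLfF cRfY in \<open>auto simp: LfE RfE\<close>)
  have E0: "E = 0\<^sub>m N N" using uniq[OF cE PE EP Eeq] .
  show ?thesis
  proof (intro allI impI)
    fix k j assume k: "k < N" and j: "j < N"
    have "E $$ (k,j) = 0" using E0 k j by simp
    hence "2 * Y $$ (k,j) = fN N k j" unfolding E_def using k j cY by (simp add: Fm_index)
    moreover have "X_mat Q \<Sigma> $$ (k,j) = 2 * Y $$ (k,j)"
      using k j carrier_matD[OF cY] unfolding X_mat_def Y_def T_def by simp
    ultimately show "X_mat Q \<Sigma> $$ (k, j) =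
     (2 * real N ^ 2 + 3 * real N + 1 + 3 * real (k+1) ^ 2 + 3 * real (j+1) ^ 2
       - 3 * (real N + 1) * real (k+1) - 3 * (real N + 1) * real (j+1)) / (3 * real N)
     - \<bar>real (k+1) - real (j+1)\<bar>" unfolding fN_def by simp
  qed
qed

end
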